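(* Let $\omega$ be a nonempty word in $\mathcal{B}$, let $n\ge1$, and let $\pi\in X_n(\omega)$ have $\omega$-decomposition $(\alpha,\omega,\gamma,\delta)$. If $\delta\notin\mathcal{B}$, then $\gamma_{-1}>\delta_1$ and $h(\omega)\ne 1$.
   Context: For a word $w=w_1\cdots w_k$ of pairwise distinct positive integers, an ascent is an index $t$ with $w_t<w_{t+1}$, a descent one with $w_t>w_{t+1}$, and the height is $h(w)=(\#\text{ascents})-(\#\text{descents})$ ($h(w)=0$ if $k\le1$). The word is ballot if every prefix has nonnegative height. $\mathcal{B}$ denotes the set of all finite ballot words of pairwise distinct positive integers (including the empty word). A ballot permutation of $[n]$ is a permutation $\pi_1\cdots\pi_n$ in one-line notation that is a ballot word. For a word $w$, $w_1$ is its first letter, $w_{-1}$ its last letter, and $w'=w_k\cdots w_1$ its reversal. For a nonempty $\omega\in\mathcal{B}$, $X_n(\omega)$ is the set of ballot permutations $\pi$ of $[n]$ that can be written as a concatenation $\pi=\alpha\omega\gamma\delta$ (with $\alpha,\gamma,\delta$ possibly empty) such that $h(\alpha\omega\gamma)=h(\omega)$. For $\pi\in X_n(\omega)$, its $\omega$-decomposition is the (unique) 4-tuple $(\alpha,\omega,\gamma,\delta)$ with $\pi=\alpha\omega\gamma\delta$, $h(\alpha\omega\gamma)=h(\omega)$ and $\gamma'\omega_{-1}\in\mathcal{B}$, where $\gamma$ is of maximal length among all words with these properties. If $\gamma$ is empty, one sets $\gamma_{-1}=\omega_{-1}$. *)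

theory Defs
  imports Main
begin

definition height :: "nat list \<Rightarrow> int" where
  "height w = (\<Sum>t<length w - 1.
      (if w ! t < w ! (t+1) then 1 else 0) - (if w ! t > w ! (t+1) then 1 else 0))"

definition ballot :: "nat list \<Rightarrow> bool" where
  "ballot w \<longleftrightarrow> (\<forall>k\<le>length w. height (take k w) \<ge> 0)"

definition Bset :: "nat list set" where
  "Bset = {w. distinct w \<and> (\<forall>x\<in>set w. x > 0) \<and> ballot w}"

definition ballot_perm :: "nat \<Rightarrow> nat list \<Rightarrow> bool" where
  "ballot_perm n \<pi> \<longleftrightarrow> distinct \<pi> \<and> set \<pi> = {1..n} \<and> ballot \<pi>"

definition Xset :: "nat \<Rightarrow> nat list \<Rightarrow> nat list set" where
  "Xset n \<omega> = {\<pi>. ballot_perm n \<pi> \<and>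
      (\<exists>\<alpha> \<gamma> \<delta>. \<pi> = \<alpha> @ \<omega> @ \<gamma> @ \<delta> \<and> height (\<alpha> @ \<omega> @ \<gamma>) = height \<omega>)}"

definition decomp_cond :: "nat list \<Rightarrow> nat list \<Rightarrow> nat list \<Rightarrow> nat list \<Rightarrow> nat list \<Rightarrow> bool" where
  "decomp_cond \<pi> \<omega> \<alpha> \<gamma> \<delta> \<longleftrightarrow>
     \<pi> = \<alpha> @ \<omega> @ \<gamma> @ \<delta> \<and> height (\<alpha> @ \<omega> @ \<gamma>) = height \<omega> \<and>
     rev \<gamma> @ [last \<omega>] \<in> Bset"

definition omega_decomp :: "nat list \<Rightarrow> nat list \<Rightarrow> nat list \<Rightarrow> nat list \<Rightarrow> nat list \<Rightarrow> bool" where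
  "omega_decomp \<pi> \<omega> \<alpha> \<gamma> \<delta> \<longleftrightarrow>
     decomp_cond \<pi> \<omega> \<alpha> \<gamma> \<delta> \<and>
     (\<forall>\<alpha>' \<gamma>' \<delta>'. decomp_cond \<pi> \<omega> \<alpha>' \<gamma>' \<delta>' \<longrightarrow> length \<gamma>' \<le> length \<gamma>)"

text \<open>\<gamma>_{-1}, with the convention \<gamma>_{-1} = \<omega>_{-1} if \<gamma> is empty.\<close>
definition gamma_last :: "nat list \<Rightarrow> nat list \<Rightarrow> nat" where
  "gamma_last \<omega> \<gamma> = (if \<gamma> = [] then last \<omega> else last \<gamma>)"

end

theory Submission
  imports Defs
begin

definition stp :: "nat \<Rightarrow> nat \<Rightarrow> int" where
  "stp a b = (if a < b then 1 else 0) - (if a > b then 1 else 0)"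

lemma height_Nil[simp]: "height [] = 0"
  by (simp add: height_def)

lemma height_single[simp]: "height [a] = 0"
  by (simp add: height_def)

lemma height_Cons2[simp]: "height (a#b#w) = stp a b + height (b#w)"
proof -
  have "height (a#b#w) = (\<Sum>t<Suc (length w).
      (if (a#b#w) ! t < (a#b#w) ! (t+1) then 1 else 0) - (if (a#b#w) ! t > (a#b#w) ! (t+1) then 1 else 0))"
    by (simp add: height_def)
  also have "\<dots> = stp a b + (\<Sum>t<length w.
      (if (b#w) ! t < (b#w) ! (t+1) then 1 else 0) - (if (b#w) ! t > (b#w) ! (t+1) then 1 else 0))"
    by (subst sum.lessThan_Suc_shift) (simp add: stp_def)
  also have "\<dots> = stp a b + height (b#w)"
    by (simp add: height_def)
  finally show ?thesis .
qed

lemma height_append: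
  "u \<noteq> [] \<Longrightarrow> v \<noteq> [] \<Longrightarrow> height (u @ v) = height u + stp (last u) (hd v) + height v"
proof (induction u)
  case Nil then show ?case by simp
next
  case (Cons a u)
  show ?case
  proof (cases u)
    case Nil
    then show ?thesis using Cons.prems by (cases v) auto
  next
    case (Cons c u')
    then show ?thesis using Cons.IH Cons.prems by simp
  qed
qed

lemma stp_swap: "stp b a = - stp a b"
  by (simp add: stp_def)

lemma stp_bounds: "stp a b \<le> 1" "stp a b \<ge> -1"
  by (auto simp: stp_def)

lemma height_rev: "height (rev w) = - height w"
proof (induction w)
  case Nil then show ?case by simp
next
  case (Cons a w)
  show ?case
  proof (cases w)
    case Nil then show ?thesis by simp
  next
    case (Cons b w')
    have "height (rev (a#w)) = height (rev w @ [a])" by simp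
    also have "\<dots> = height (rev w) + stp (last (rev w)) a + 0"
      using height_append[of "rev w" "[a]"] Cons by simp
    also have "last (rev w) = b" using Cons by simp
    finally show ?thesis using Cons.IH Cons stp_swap[of a b] by simp
  qed
qed

theorem lemma2p2:
  fixes \<omega> \<pi> \<alpha> \<gamma> \<delta> :: "nat list" and n :: nat
  assumes "\<omega> \<noteq> []" and "\<omega> \<in> Bset" and "n \<ge> 1"
    and "\<pi> \<in> Xset n \<omega>"
    and "omega_decomp \<pi> \<omega> \<alpha> \<gamma> \<delta>"
    and "\<delta> \<notin> Bset"
  shows "gamma_last \<omega> \<gamma> > hd \<delta> \<and> height \<omega> \<noteq> 1"
proof -
  have dc: "decomp_cond \<pi> \<omega> \<alpha> \<gamma> \<delta>" and mx: "\<And>\<alpha>' \<gamma>' \<delta>'. decomp_cond \<pi> \<omega> \<alpha>' \<gamma>' \<delta>' \<Longrightarrow> length \<gamma>' \<le> length \<gamma>"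
    using assms(5) unfolding omega_decomp_def by auto
  have pi_eq: "\<pi> = \<alpha> @ \<omega> @ \<gamma> @ \<delta>" and hP: "height (\<alpha> @ \<omega> @ \<gamma>) = height \<omega>"
    and R0: "rev \<gamma> @ [last \<omega>] \<in> Bset"
    using dc unfolding decomp_cond_def by auto
  have dpi: "distinct \<pi>" and spi: "set \<pi> = {1..n}" and bpi: "ballot \<pi>"
    using assms(4) unfolding Xset_def ballot_perm_def by auto
  have pos: "\<forall>y\<in>set \<pi>. y > 0" using spi by auto
  have "\<not> ballot \<delta>"
    using assms(6) dpi pos pi_eq unfolding Bset_def by auto
  then have ex: "\<exists>k. k \<le> length \<delta> \<and> height (take k \<delta>) < 0"
    unfolding ballot_def by (auto simp: not_le)
  define k where "k = (LEAST k. k \<le> length \<delta> \<and> height (take k \<delta>) < 0)"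
  have k1: "k \<le> length \<delta>" and k2: "height (take k \<delta>) < 0"
    using LeastI_ex[OF ex] unfolding k_def by auto
  have kmin: "\<And>j. j < k \<Longrightarrow> height (take j \<delta>) \<ge> 0"
  proof -
    fix j assume "j < k"
    then have "\<not> (j \<le> length \<delta> \<and> height (take j \<delta>) < 0)"
      using not_less_Least unfolding k_def by blast
    then show "height (take j \<delta>) \<ge> 0" using \<open>j < k\<close> k1 by auto
  qed
  have "k \<noteq> 0" using k2 by (cases k) auto
  have "k \<noteq> 1"
  proof
    assume "k = 1"
    then show False using k2 k1 by (cases \<delta>) auto
  qed
  define d where "d = take k \<delta>"
  define e where "e = drop k \<delta>"
  have de: "\<delta> = d @ e" unfolding d_def e_def by simp
  have ld: "length d = k" using k1 unfolding d_def by simp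
  have dne: "d \<noteq> []" using ld \<open>k \<noteq> 0\<close> by auto
  have hdd: "hd d = hd \<delta>" using dne unfolding d_def by (cases \<delta>) auto
  have pre: "\<And>i. i < k \<Longrightarrow> height (take i d) \<ge> 0"
    using kmin unfolding d_def by (simp add: min_def)
  have hd_eq: "height d = -1"
  proof -
    have "take k \<delta> = take (k-1) \<delta> @ [\<delta> ! (k-1)]"
      using k1 \<open>k \<noteq> 0\<close> by (metis Suc_diff_1 Suc_le_lessD bot_nat_0.not_eq_extremum take_Suc_conv_app_nth)
    moreover have "take (k-1) \<delta> \<noteq> []" using k1 \<open>k \<noteq> 0\<close> \<open>k \<noteq> 1\<close> by auto
    ultimately have "height (take k \<delta>) = height (take (k-1) \<delta>) + stp (last (take (k-1) \<delta>)) (\<delta> ! (k-1))"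
      using height_append[of "take (k-1) \<delta>" "[\<delta> ! (k-1)]"] by simp
    moreover have "height (take (k-1) \<delta>) \<ge> 0" using kmin \<open>k \<noteq> 0\<close> by simp
    ultimately have "height (take k \<delta>) \<ge> -1" using stp_bounds(2) by smt
    then show ?thesis using k2 unfolding d_def by simp
  qed
  have suf: "\<And>i. i \<le> k \<Longrightarrow> height (drop i d) \<le> 0"
  proof -
    fix i assume "i \<le> k"
    show "height (drop i d) \<le> 0"
    proof (cases "i = 0 \<or> i = k")
      case True then show ?thesis using hd_eq ld by auto
    next
      case False
      then have a: "take i d \<noteq> []" "drop i d \<noteq> []" using ld \<open>i \<le> k\<close> by auto
      have "height d = height (take i d) + stp (last (take i d)) (hd (drop i d)) + height (drop i d)"
        using height_append[OF a] by simp
      moreover have "height (take i d) \<ge> 0" using pre False \<open>i \<le> k\<close> by simp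
      ultimately show ?thesis using hd_eq stp_bounds(2)[of "last (take i d)" "hd (drop i d)"] by linarith
    qed
  qed
  define P where "P = \<alpha> @ \<omega> @ \<gamma>"
  define x where "x = last P"
  have Pne: "P \<noteq> []" using assms(1) unfolding P_def by simp
  have gl: "gamma_last \<omega> \<gamma> = x"
    unfolding gamma_last_def x_def P_def using assms(1) by auto
  have hR: "hd (rev \<gamma> @ [last \<omega>]) = x"
    unfolding x_def P_def using assms(1) by (cases "\<gamma> = []") (auto simp: hd_rev)
  have pi2: "\<pi> = P @ d @ e" using pi_eq de unfolding P_def by simp
  have hPd: "height (P @ d) = height \<omega> + stp x (hd \<delta>) - 1"
    using height_append[OF Pne dne] hP hdd hd_eq unfolding x_def P_def by simp
  have "take (length P + k) \<pi> = P @ d" using pi2 ld by simp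
  moreover have "length P + k \<le> length \<pi>" using pi2 ld by simp
  ultimately have b1: "height (P @ d) \<ge> 0" using bpi unfolding ballot_def by metis
  have dpi2: "distinct (P @ d @ e)" using dpi pi2 by simp
  have "x \<in> set P" unfolding x_def using Pne by simp
  moreover have "hd \<delta> \<in> set d" using hdd dne by (metis list.set_sel(1))
  ultimately have xne: "x \<noteq> hd \<delta>" using dpi2 by auto
  have xgt: "x > hd \<delta>"
  proof (rule ccontr)
    assume "\<not> x > hd \<delta>"
    then have xl: "x < hd \<delta>" using xne by simp
    define R where "R = rev \<gamma> @ [last \<omega>]"
    have RB: "R \<in> Bset" using R0 unfolding R_def .
    have setR: "set R \<subseteq> set P" unfolding R_def P_def using assms(1) by auto
    have "rev (\<gamma> @ d) @ [last \<omega>] = rev d @ R" unfolding R_def by simp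
    have dist: "distinct (rev d @ R)"
      using RB dpi2 setR unfolding Bset_def by auto
    have posd: "\<forall>y\<in>set (rev d @ R). y > 0"
      using RB pos pi2 unfolding Bset_def by auto
    have bal: "ballot (rev d @ R)"
      unfolding ballot_def
    proof (intro allI impI)
      fix j assume "j \<le> length (rev d @ R)"
      show "0 \<le> height (take j (rev d @ R))"
      proof (cases "j \<le> k")
        case True
        then have "take j (rev d @ R) = rev (drop (k - j) d)"
          using ld by (simp add: take_rev)
        then show ?thesis using suf[of "k - j"] height_rev by simp
      next
        case False
        then have t: "take j (rev d @ R) = rev d @ take (j - k) R" using ld by simp
        have tne: "take (j - k) R \<noteq> []" using False unfolding R_def by simp
        have rne: "rev d \<noteq> []" using dne by simp
        have "hd (take (j - k) R) = hd R" using tne by (cases R; cases "j - k") auto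
        then have "hd (take (j - k) R) = x" using hR unfolding R_def by simp
        moreover have "last (rev d) = hd \<delta>" using hdd dne by (simp add: last_rev)
        moreover have "height (take (j - k) R) \<ge> 0"
        proof -
          have "j - k \<le> length R" using \<open>j \<le> length (rev d @ R)\<close> ld by simp
          then show ?thesis using RB unfolding Bset_def ballot_def by blast
        qed
        moreover have "stp (hd \<delta>) x = -1" using xl by (simp add: stp_def)
        ultimately show ?thesis using t height_append[OF rne tne] height_rev[of d] hd_eq by simp
      qed
    qed
    have "decomp_cond \<pi> \<omega> \<alpha> (\<gamma> @ d) e"
      unfolding decomp_cond_def
    proof (intro conjI)
      show "\<pi> = \<alpha> @ \<omega> @ (\<gamma> @ d) @ e" using pi2 unfolding P_def by simp
      have "stp x (hd \<delta>) = 1" using xl by (simp add: stp_def)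
      then show "height (\<alpha> @ \<omega> @ \<gamma> @ d) = height \<omega>" using hPd unfolding P_def by simp
      show "rev (\<gamma> @ d) @ [last \<omega>] \<in> Bset"
        using dist posd bal unfolding Bset_def R_def by simp
    qed
    from mx[OF this] dne show False by simp
  qed
  have "stp x (hd \<delta>) = -1" using xgt by (simp add: stp_def)
  then have "height \<omega> \<ge> 2" using hPd b1 by simp
  then show ?thesis using gl xgt by simp
qed

end
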